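(* Let $M$ be a closed affine $(n+1)$-dimensional manifold with developing pair $(\mathrm{dev},\mathrm{hol})$, $\Gamma=\pi_1(M,p)$, and suppose the affine holonomy admits a parallel (constant) vector field, i.e. there is a nonzero vector $v\in\mathbb{R}^{n+1}$ fixed by the linear part of every element of $\mathrm{hol}(\Gamma)$. Let $T_t(x)=x+tv$ be the associated translational flow on $\mathbb{A}^{n+1}$. Then there exists a complete flow $\widetilde\Theta_t$ on the universal cover $\widetilde M$, commuting with the deck group $\Gamma$, such that $\mathrm{dev}\circ\widetilde\Theta_t=T_t\circ\mathrm{dev}$ for all $t\in\mathbb{R}$. Moreover, there exist nonempty open subsets of $\widetilde M$ invariant under $\widetilde\Theta_t$ on which the restriction of $\mathrm{dev}$ is a diffeomorphism onto its image.
   Context: An $m$-dimensional affine manifold is a smooth $m$-manifold $M$ with an atlas of charts into $\mathbb{A}^m$ whose transition maps are, on each connected component of each overlap, restrictions of affine automorphisms. Such a structure determines a developing pair $(\mathrm{dev},\mathrm{hol})$: a local diffeomorphism $\mathrm{dev}:\widetilde M\to\mathbb{A}^m$ on the universal cover and a homomorphism $\mathrm{hol}:\Gamma=\pi_1(M,p)\to\mathrm{Aff}(m,\mathbb{R})$ with $\mathrm{dev}\circ\gamma=\mathrm{hol}(\gamma)\circ\mathrm{dev}$ for every deck transformation $\gamma\in\Gamma$. *)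

theory Defs
  imports "HOL-Analysis.Analysis"
begin

definition local_homeo :: "('x::topological_space \<Rightarrow> 'y::topological_space) \<Rightarrow> bool" where
  "local_homeo f \<longleftrightarrow>
     (\<forall>x. \<exists>U. open U \<and> x \<in> U \<and> open (f ` U) \<and> (\<exists>g. homeomorphism U (f ` U) f g))"

definition homeo_group :: "('x::topological_space \<Rightarrow> 'x) set \<Rightarrow> bool" where
  "homeo_group G \<longleftrightarrow> id \<in> G \<and>
     (\<forall>g\<in>G. \<forall>h\<in>G. g \<circ> h \<in> G) \<and>
     (\<forall>g\<in>G. \<exists>h\<in>G. g \<circ> h = id \<and> h \<circ> g = id) \<and>
     (\<forall>g\<in>G. continuous_on UNIV g)"

text \<open>Free, properly discontinuous action with compact quotient: then
  the orbit space is a closed manifold with fundamental group G and universal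
  cover the ambient space (when the space is simply connected).\<close>
definition free_action :: "('x \<Rightarrow> 'x) set \<Rightarrow> bool" where
  "free_action G \<longleftrightarrow> (\<forall>g\<in>G. \<forall>x. g x = x \<longrightarrow> g = id)"

definition properly_discontinuous :: "('x::topological_space \<Rightarrow> 'x) set \<Rightarrow> bool" where
  "properly_discontinuous G \<longleftrightarrow>
     (\<forall>K. compact K \<longrightarrow> finite {g\<in>G. g ` K \<inter> K \<noteq> {}})"

definition cocompact :: "('x::topological_space \<Rightarrow> 'x) set \<Rightarrow> bool" where
  "cocompact G \<longleftrightarrow> (\<exists>K. compact K \<and> (\<Union>g\<in>G. g ` K) = UNIV)"

end

theory Submission
  imports Defs
begin


lemma Hausdorff_t2: "Hausdorff_space (euclidean :: 'a::t2_space topology)"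
  unfolding Hausdorff_space_def disjnt_def using hausdorff by auto

lemma lh_cont:
  fixes dev :: "'x::t2_space \<Rightarrow> 'y::topological_space"
  assumes "local_homeo dev" shows "continuous_on UNIV dev"
proof -
  have "continuous (at x) dev" for x
  proof -
    obtain U g where "open U" "x \<in> U" "homeomorphism U (dev ` U) dev g"
      using assms unfolding local_homeo_def by blast
    then show ?thesis
      by (metis continuous_on_eq_continuous_at homeomorphism_def)
  qed
  then show ?thesis by (simp add: continuous_at_imp_continuous_on)
qed

lemma lh_open_map:
  assumes "local_homeo dev" "open S" shows "open (dev ` S)"
proof -
  have "\<exists>T. open T \<and> y \<in> T \<and> T \<subseteq> dev ` S" if "y \<in> dev ` S" for y
  proof -
    from that obtain x where x: "x \<in> S" "y = dev x" by (rule imageE) auto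
    obtain U g where U: "open U" "x \<in> U" "open (dev ` U)" "homeomorphism U (dev ` U) dev g"
      using assms unfolding local_homeo_def by blast
    have "openin (top_of_set U) (U \<inter> S)" using assms(2) U(1) by (simp add: openin_open_Int)
    then have "openin (top_of_set (dev ` U)) (dev ` (U \<inter> S))"
      using homeomorphism_imp_open_map[OF U(4)] by blast
    then have "open (dev ` (U \<inter> S))" using U(3) openin_open_trans by blast
    then show ?thesis using x U(2) by blast
  qed
  then show ?thesis by (meson open_subopen)
qed

lemma lift_unique:
  fixes dev :: "'x::t2_space \<Rightarrow> 'y::topological_space"
  assumes dev: "local_homeo dev" and I: "connected I"
    and c1: "continuous_on I c1" and c2: "continuous_on I c2"
    and eq: "\<forall>t\<in>I. dev (c1 t) = dev (c2 t)"
    and t0: "t0 \<in> I" "c1 t0 = c2 t0" and t: "t \<in> I"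
  shows "c1 t = c2 t"
proof -
  let ?A = "{t \<in> I. c1 t = c2 t}"
  have cl: "closedin (top_of_set I) ?A"
    using closedin_continuous_maps_eq[of "euclidean::'x topology" "top_of_set I" c1 c2]
    by (simp add: Hausdorff_t2 continuous_map_iff_continuous c1 c2)
  have op: "openin (top_of_set I) ?A"
  proof (subst openin_subopen, intro ballI)
    fix s assume s: "s \<in> ?A"
    obtain U g where U: "open U" "c1 s \<in> U" "homeomorphism U (dev ` U) dev g"
      using dev unfolding local_homeo_def by blast
    have inj: "inj_on dev U" using U(3) by (metis homeomorphism_def inj_on_inverseI)
    have o1: "openin (top_of_set I) (I \<inter> c1 -` U)" using c1 U(1) continuous_openin_preimage_eq by blast
    have o2: "openin (top_of_set I) (I \<inter> c2 -` U)" using c2 U(1) continuous_openin_preimage_eq by blast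
    show "\<exists>T. openin (top_of_set I) T \<and> s \<in> T \<and> T \<subseteq> ?A"
    proof (intro exI conjI)
      show "openin (top_of_set I) ((I \<inter> c1 -` U) \<inter> (I \<inter> c2 -` U))" using o1 o2 by blast
      show "s \<in> (I \<inter> c1 -` U) \<inter> (I \<inter> c2 -` U)" using s U(2) by auto
      show "(I \<inter> c1 -` U) \<inter> (I \<inter> c2 -` U) \<subseteq> ?A"
        using inj eq by (auto simp: inj_on_def)
    qed
  qed
  have "?A = I" using I cl op t0 unfolding connected_clopen by blast
  then show ?thesis using t by blast
qed



locale S =
  fixes dev :: "'x::t2_space \<Rightarrow> real ^ 'n"
    and G :: "('x \<Rightarrow> 'x) set"
    and L :: "('x \<Rightarrow> 'x) \<Rightarrow> real ^ 'n ^ 'n"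
    and b :: "('x \<Rightarrow> 'x) \<Rightarrow> real ^ 'n"
    and v :: "real ^ 'n"
  assumes dev: "local_homeo dev"
    and grp: "homeo_group G" and coc: "cocompact G"
    and hol: "\<forall>g\<in>G. invertible (L g) \<and> (\<forall>x. dev (g x) = L g *v dev x + b g)"
    and par: "v \<noteq> 0" "\<forall>g\<in>G. L g *v v = v"
begin

lemma chart:
  "\<exists>W V h \<rho>. open W \<and> y \<in> W \<and> W \<subseteq> V \<and> \<rho> > 0 \<and> homeomorphism V (dev ` V) dev h \<and>
     (\<forall>z\<in>W. \<forall>s. \<bar>s\<bar> \<le> \<rho> \<longrightarrow> dev z + s *\<^sub>R v \<in> dev ` V)"
proof -
  obtain V h where V: "open V" "y \<in> V" "open (dev ` V)" "homeomorphism V (dev ` V) dev h"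
    using dev unfolding local_homeo_def by blast
  obtain r where r: "r > 0" "ball (dev y) r \<subseteq> dev ` V"
    using V(2,3) open_contains_ball by blast
  define W where "W = V \<inter> dev -` ball (dev y) (r/2)"
  have oW: "open W" unfolding W_def
    using continuous_on_open_vimage[of UNIV dev] lh_cont[OF dev] V(1)
    by (simp add: open_Int)
  have nv: "norm v > 0" using par(1) by simp
  define \<rho> where "\<rho> = r / (2 * norm v)"
  have rho: "\<rho> > 0" using r nv by (simp add: \<rho>_def)
  have "dev z + s *\<^sub>R v \<in> dev ` V" if z: "z \<in> W" and s: "\<bar>s\<bar> \<le> \<rho>" for z s
  proof -
    have d1: "dist (dev y) (dev z) < r/2" using z by (simp add: W_def)
    have "norm (s *\<^sub>R v) = \<bar>s\<bar> * norm v" by simp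
    also have "\<dots> \<le> \<rho> * norm v" using s nv by (simp add: mult_right_mono)
    also have "\<dots> = r/2" using nv by (simp add: \<rho>_def)
    finally have d2: "norm (s *\<^sub>R v) \<le> r/2" .
    have "dist (dev y) (dev z + s *\<^sub>R v) \<le> dist (dev y) (dev z) + norm (s *\<^sub>R v)"
      by (metis dist_norm dist_triangle2 add_diff_cancel_left' dist_commute norm_minus_commute
          diff_add_eq_diff_diff_swap)
    then have "dist (dev y) (dev z + s *\<^sub>R v) < r" using d1 d2 by linarith
    then show ?thesis using r(2) by auto
  qed
  then show ?thesis using oW V rho r(1)
    apply (rule_tac exI[of _ W], rule_tac exI[of _ V], rule_tac exI[of _ h], rule_tac exI[of _ \<rho>])
    by (auto simp: W_def)
qed

lemma ginv: "g \<in> G \<Longrightarrow> \<exists>h\<in>G. g \<circ> h = id \<and> h \<circ> g = id"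
  using grp unfolding homeo_group_def by blast

lemma gcont: "g \<in> G \<Longrightarrow> continuous_on UNIV g"
  using grp unfolding homeo_group_def by blast

lemma unif:
  "\<exists>\<delta>>0. \<forall>x. \<exists>g\<in>G. \<exists>gi\<in>G. \<exists>W V h. g \<circ> gi = id \<and> gi \<circ> g = id \<and> open W \<and> gi x \<in> W \<and> W \<subseteq> V \<and>
      homeomorphism V (dev ` V) dev h \<and> (\<forall>z\<in>W. \<forall>s. \<bar>s\<bar> \<le> \<delta> \<longrightarrow> dev z + s *\<^sub>R v \<in> dev ` V)"
proof -
  obtain Wf Vf hf \<rho>f where ch: "\<And>y. open (Wf y) \<and> y \<in> Wf y \<and> Wf y \<subseteq> Vf y \<and> \<rho>f y > 0 \<and>
      homeomorphism (Vf y) (dev ` Vf y) dev (hf y) \<and>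
     (\<forall>z\<in>Wf y. \<forall>s. \<bar>s\<bar> \<le> \<rho>f y \<longrightarrow> dev z + s *\<^sub>R v \<in> dev ` Vf y)"
    using chart by metis
  obtain K where K: "compact K" "(\<Union>g\<in>G. g ` K) = UNIV" using coc unfolding cocompact_def by blast
  obtain F where F: "F \<subseteq> K" "finite F" "K \<subseteq> (\<Union>y\<in>F. Wf y)"
    using compactE_image[OF K(1), of K Wf] ch by blast
  define \<delta> where "\<delta> = Min (insert 1 (\<rho>f ` F))"
  have dpos: "\<delta> > 0" unfolding \<delta>_def using F(2) ch by auto
  have dle: "\<delta> \<le> \<rho>f y" if "y \<in> F" for y unfolding \<delta>_def using F(2) that by auto
  have "\<exists>g\<in>G. \<exists>gi\<in>G. \<exists>W V h. g \<circ> gi = id \<and> gi \<circ> g = id \<and> open W \<and> gi x \<in> W \<and> W \<subseteq> V \<and>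
      homeomorphism V (dev ` V) dev h \<and> (\<forall>z\<in>W. \<forall>s. \<bar>s\<bar> \<le> \<delta> \<longrightarrow> dev z + s *\<^sub>R v \<in> dev ` V)" for x
  proof -
    obtain g k where g: "g \<in> G" "k \<in> K" "x = g k" using K(2) by blast
    obtain gi where gi: "gi \<in> G" "g \<circ> gi = id" "gi \<circ> g = id" using ginv[OF g(1)] by blast
    have "gi x = k" using gi(3) g(3) by (metis comp_apply id_apply)
    obtain y where y: "y \<in> F" "k \<in> Wf y" using F(3) g(2) by blast
    show ?thesis
      apply (rule bexI[OF _ g(1)], rule bexI[OF _ gi(1)])
      apply (rule exI[of _ "Wf y"], rule exI[of _ "Vf y"], rule exI[of _ "hf y"])
      using gi \<open>gi x = k\<close> y ch[of y] dle[OF y(1)] by auto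
  qed
  then show ?thesis using dpos by blast
qed

end


context S begin

definition "dl = (SOME \<delta>. \<delta>>0 \<and> (\<forall>x. \<exists>g\<in>G. \<exists>gi\<in>G. \<exists>W V h. g \<circ> gi = id \<and> gi \<circ> g = id \<and> open W \<and> gi x \<in> W \<and> W \<subseteq> V \<and>
      homeomorphism V (dev ` V) dev h \<and> (\<forall>z\<in>W. \<forall>s. \<bar>s\<bar> \<le> \<delta> \<longrightarrow> dev z + s *\<^sub>R v \<in> dev ` V)))"

lemma dl: "dl > 0" "\<forall>x. \<exists>g\<in>G. \<exists>gi\<in>G. \<exists>W V h. g \<circ> gi = id \<and> gi \<circ> g = id \<and> open W \<and> gi x \<in> W \<and> W \<subseteq> V \<and>
      homeomorphism V (dev ` V) dev h \<and> (\<forall>z\<in>W. \<forall>s. \<bar>s\<bar> \<le> dl \<longrightarrow> dev z + s *\<^sub>R v \<in> dev ` V)"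
  using someI_ex[OF unif] unfolding dl_def[symmetric] by auto

lemma gdev: assumes "g \<in> G" "dev y = dev z + s *\<^sub>R v" shows "dev (g y) = dev (g z) + s *\<^sub>R v"
proof -
  have Lv: "L g *v v = v" using par(2) assms(1) by blast
  have hy: "dev (g y) = L g *v dev y + b g" using hol assms(1) by blast
  have hz: "dev (g z) = L g *v dev z + b g" using hol assms(1) by blast
  show ?thesis
    unfolding hy hz assms(2) matrix_vector_right_distrib matrix_vector_mult_scaleR Lv
    by (simp only: add_ac)
qed

lemma loclift: "\<exists>c. continuous_on {-dl..dl} c \<and> c 0 = x \<and> (\<forall>s\<in>{-dl..dl}. dev (c s) = dev x + s *\<^sub>R v)"
proof -
  obtain g gi W V h where d: "g \<in> G" "gi \<in> G" "g \<circ> gi = id" "gi \<circ> g = id" "open W" "gi x \<in> W" "W \<subseteq> V"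
      "homeomorphism V (dev ` V) dev h" "\<forall>z\<in>W. \<forall>s. \<bar>s\<bar> \<le> dl \<longrightarrow> dev z + s *\<^sub>R v \<in> dev ` V"
    using dl(2)[rule_format, of x] by (elim bexE exE conjE) (rule that; assumption)
  define z0 where "z0 = gi x"
  have gz0: "g z0 = x" using d(3) unfolding z0_def by (metis comp_apply id_apply)
  have hz0: "h (dev z0) = z0" using d(6,7,8) unfolding z0_def homeomorphism_def by auto
  have inV: "dev z0 + s *\<^sub>R v \<in> dev ` V" if "s \<in> {-dl..dl}" for s
    using d(9) d(6) that unfolding z0_def by auto
  have hinv: "dev (h w) = w" if "w \<in> dev ` V" for w using d(8) that unfolding homeomorphism_def by auto
  have hc: "continuous_on (dev ` V) h" using d(8) unfolding homeomorphism_def by auto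
  have c1: "continuous_on {-dl..dl} (\<lambda>s. h (dev z0 + s *\<^sub>R v))"
    by (rule continuous_on_compose2[OF hc]) (auto intro!: continuous_intros simp: inV)
  have c2: "continuous_on {-dl..dl} (\<lambda>s. g (h (dev z0 + s *\<^sub>R v)))"
    by (rule continuous_on_compose2[OF gcont[OF d(1)] c1]) auto
  show ?thesis
  proof (intro exI conjI ballI)
    show "continuous_on {-dl..dl} (\<lambda>s. g (h (dev z0 + s *\<^sub>R v)))" by (rule c2)
    show "g (h (dev z0 + 0 *\<^sub>R v)) = x" using hz0 gz0 by simp
    fix s assume s: "s \<in> {-dl..dl}"
    show "dev (g (h (dev z0 + s *\<^sub>R v))) = dev x + s *\<^sub>R v"
      using gdev[OF d(1), of "h (dev z0 + s *\<^sub>R v)" z0 s] hinv[OF inV[OF s]] gz0 by simp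
  qed
qed

lemma intlift: "\<exists>c. continuous_on {-(real n * dl)..real n * dl} c \<and> c 0 = x \<and>
   (\<forall>t\<in>{-(real n * dl)..real n * dl}. dev (c t) = dev x + t *\<^sub>R v)"
proof (induction n arbitrary: x)
  case 0
  show ?case by (intro exI[of _ "\<lambda>_. x"]) auto
next
  case (Suc n)
  define T where "T = real n * dl"
  have T: "T \<ge> 0" using dl(1) by (simp add: T_def)
  have T': "real (Suc n) * dl = T + dl" by (simp add: T_def algebra_simps)
  obtain c where c: "continuous_on {-T..T} c" "c 0 = x" "\<forall>t\<in>{-T..T}. dev (c t) = dev x + t *\<^sub>R v"
    using Suc.IH[of x] unfolding T_def by blast
  obtain cp where cp: "continuous_on {-dl..dl} cp" "cp 0 = c T" "\<forall>s\<in>{-dl..dl}. dev (cp s) = dev (c T) + s *\<^sub>R v"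
    using loclift by blast
  obtain cq where cq: "continuous_on {-dl..dl} cq" "cq 0 = c (-T)" "\<forall>s\<in>{-dl..dl}. dev (cq s) = dev (c (-T)) + s *\<^sub>R v"
    using loclift by blast
  define g where "g = (\<lambda>t. if t \<le> T then c t else cp (t - T))"
  define c' where "c' = (\<lambda>t. if t \<le> -T then cq (t + T) else g t)"
  let ?S = "{-(T+dl)..T+dl}"
  have gc: "continuous_on {-T..T+dl} g" unfolding g_def
  proof (rule continuous_on_cases_le)
    show "continuous_on {t \<in> {-T..T+dl}. t \<le> T} c" by (rule continuous_on_subset[OF c(1)]) auto
    have "continuous_on {t \<in> {-T..T+dl}. T \<le> t} (\<lambda>t. t - T)" by (intro continuous_intros)
    then show "continuous_on {t \<in> {-T..T+dl}. T \<le> t} (\<lambda>t. cp (t - T))"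
      by (rule continuous_on_compose2[OF cp(1)]) auto
    show "continuous_on {-T..T+dl} (\<lambda>x. x)" by (intro continuous_intros)
    show "\<And>t. t \<in> {-T..T+dl} \<Longrightarrow> t = T \<Longrightarrow> c t = cp (t - T)" using cp(2) by simp
  qed
  have cc: "continuous_on ?S c'" unfolding c'_def
  proof (rule continuous_on_cases_le)
    have "continuous_on {t \<in> ?S. t \<le> -T} (\<lambda>t. t + T)" by (intro continuous_intros)
    then show "continuous_on {t \<in> ?S. t \<le> -T} (\<lambda>t. cq (t + T))"
      by (rule continuous_on_compose2[OF cq(1)]) auto
    show "continuous_on {t \<in> ?S. -T \<le> t} g" by (rule continuous_on_subset[OF gc]) auto
    show "continuous_on ?S (\<lambda>x. x)" by (intro continuous_intros)
    show "\<And>t. t \<in> ?S \<Longrightarrow> t = -T \<Longrightarrow> cq (t + T) = g t" using cq(2) T by (simp add: g_def)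
  qed
  have dv: "dev (c' t) = dev x + t *\<^sub>R v" if t: "t \<in> ?S" for t
  proof (cases "t \<le> -T")
    case True
    then have "dev (c' t) = dev (c (-T)) + (t + T) *\<^sub>R v" using cq(3) t by (simp add: c'_def)
    also have "\<dots> = dev x + t *\<^sub>R v" using c(3) T by (simp add: algebra_simps)
    finally show ?thesis .
  next
    case F: False
    show ?thesis
    proof (cases "t \<le> T")
      case True then show ?thesis using F c(3) by (simp add: c'_def g_def)
    next
      case False
      then have "dev (c' t) = dev (c T) + (t - T) *\<^sub>R v" using cp(3) t F T by (simp add: c'_def g_def)
      also have "\<dots> = dev x + t *\<^sub>R v" using c(3) T by (simp add: algebra_simps)
      finally show ?thesis .
    qed
  qed
  have c0: "c' 0 = x" using c(2) cq(2) T dl(1) by (simp add: c'_def g_def)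
  show ?case unfolding T'
  proof (rule exI[of _ c'], intro conjI ballI)
    show "continuous_on ?S c'" by (rule cc)
    show "c' 0 = x" by (rule c0)
    fix t assume "t \<in> ?S" then show "dev (c' t) = dev x + t *\<^sub>R v" by (rule dv)
  qed
qed

end


context S begin

definition "islift x c \<longleftrightarrow> continuous_on UNIV c \<and> c 0 = x \<and> (\<forall>t. dev (c t) = dev x + t *\<^sub>R v)"

lemma glift: "\<exists>c. islift x c"
proof -
  define Cn where "Cn n = (SOME c. continuous_on {-(real n * dl)..real n * dl} c \<and> c 0 = x \<and>
   (\<forall>t\<in>{-(real n * dl)..real n * dl}. dev (c t) = dev x + t *\<^sub>R v))" for n
  have Cn: "continuous_on {-(real n * dl)..real n * dl} (Cn n) \<and> Cn n 0 = x \<and>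
   (\<forall>t\<in>{-(real n * dl)..real n * dl}. dev (Cn n t) = dev x + t *\<^sub>R v)" for n
    unfolding Cn_def by (rule someI_ex[OF intlift])
  define m where "m t = nat \<lceil>\<bar>t\<bar> / dl\<rceil> + 1" for t
  define c where "c t = Cn (m t) t" for t
  have mle: "\<bar>t\<bar> \<le> real (m t) * dl" for t
  proof -
    have "\<bar>t\<bar> / dl \<le> real (m t)" unfolding m_def by linarith
    then show ?thesis using dl(1) by (simp add: field_simps)
  qed
  have agree: "Cn n t = Cn k t" if "\<bar>t\<bar> \<le> real n * dl" "\<bar>t\<bar> \<le> real k * dl" for n k t
  proof (rule lift_unique[OF dev, of "{-\<bar>t\<bar>..\<bar>t\<bar>}" _ _ 0])
    show "continuous_on {-\<bar>t\<bar>..\<bar>t\<bar>} (Cn n)" using Cn[of n] that(1) by (rule_tac continuous_on_subset) auto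
    show "continuous_on {-\<bar>t\<bar>..\<bar>t\<bar>} (Cn k)" using Cn[of k] that(2) by (rule_tac continuous_on_subset) auto
    show "\<forall>s\<in>{-\<bar>t\<bar>..\<bar>t\<bar>}. dev (Cn n s) = dev (Cn k s)" using Cn[of n] Cn[of k] that by auto
    show "Cn n 0 = Cn k 0" using Cn by simp
  qed auto
  have "continuous_on {-(real N * dl)<..<real N * dl} c" for N
  proof (rule continuous_on_eq)
    show "continuous_on {-(real N * dl)<..<real N * dl} (Cn N)"
      using Cn[of N] by (rule_tac continuous_on_subset) auto
    fix t assume "t \<in> {-(real N * dl)<..<real N * dl}"
    then have "\<bar>t\<bar> \<le> real N * dl" by auto
    then show "Cn N t = c t" unfolding c_def using agree mle by blast
  qed
  then have "continuous_on (\<Union>N. {-(real N * dl)<..<real N * dl}) c"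
    by (intro continuous_on_open_Union) auto
  moreover have "(\<Union>N. {-(real N * dl)<..<real N * dl}) = UNIV"
  proof -
    have "t \<in> {-(real (m t + 1) * dl)<..<real (m t + 1) * dl}" for t
      using mle[of t] dl(1) by (auto simp: algebra_simps)
    then show ?thesis by blast
  qed
  ultimately have f1: "continuous_on UNIV c" by simp
  have f2: "c 0 = x" using Cn by (simp add: c_def)
  have f3: "dev (c t) = dev x + t *\<^sub>R v" for t
  proof -
    have "t \<in> {-(real (m t) * dl)..real (m t) * dl}" using mle[of t] by auto
    then show ?thesis using Cn[of "m t"] unfolding c_def by blast
  qed
  have "islift x c" unfolding islift_def using f1 f2 f3 by simp
  then show ?thesis by blast
qed

definition "Th t x = (SOME c. islift x c) t"

lemma Th_lift: "islift x (\<lambda>t. Th t x)"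
  unfolding Th_def using someI_ex[OF glift] by simp


lemma Th_char:
  assumes "connected I" "0 \<in> I" "t \<in> I" "continuous_on I c" "c 0 = x" "\<forall>s\<in>I. dev (c s) = dev x + s *\<^sub>R v"
  shows "Th t x = c t"
proof (rule lift_unique[OF dev assms(1) _ assms(4) _ assms(2) _ assms(3)])
  show "continuous_on I (\<lambda>t. Th t x)" using Th_lift[of x] unfolding islift_def
    by (meson continuous_on_subset subset_UNIV)
  show "\<forall>t\<in>I. dev (Th t x) = dev (c t)" using Th_lift[of x] assms(6) unfolding islift_def by auto
  show "Th 0 x = c 0" using Th_lift[of x] assms(5) unfolding islift_def by auto
qed

lemma Th_dev: "dev (Th t x) = dev x + t *\<^sub>R v"
  using Th_lift[of x] unfolding islift_def by auto

lemma Th_cont1: "continuous_on UNIV (\<lambda>t. Th t x)"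
  using Th_lift[of x] unfolding islift_def by auto

lemma Th0: "Th 0 = id"
  using Th_lift unfolding islift_def by auto

lemma Th_add: "Th (s + t) = Th s \<circ> Th t"
proof
  fix x
  have "Th s (Th t x) = Th (s + t) x"
  proof (rule Th_char[of UNIV])
    show "continuous_on UNIV (\<lambda>r. Th (r + t) x)"
      by (rule continuous_on_compose2[OF Th_cont1[of x]]) (auto intro!: continuous_intros)
    show "\<forall>r\<in>UNIV. dev (Th (r + t) x) = dev (Th t x) + r *\<^sub>R v"
      by (simp add: Th_dev algebra_simps)
    show "Th (0 + t) x = Th t x" by simp
  qed auto
  then show "Th (s + t) x = (Th s \<circ> Th t) x" by simp
qed

lemma Th_comm: assumes "g \<in> G" shows "Th t \<circ> g = g \<circ> Th t"
proof
  fix x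
  have "Th t (g x) = g (Th t x)"
  proof (rule Th_char[of UNIV])
    show "continuous_on UNIV (\<lambda>r. g (Th r x))"
      by (rule continuous_on_compose2[OF gcont[OF assms] Th_cont1[of x]]) auto
    show "\<forall>r\<in>UNIV. dev (g (Th r x)) = dev (g x) + r *\<^sub>R v"
      using gdev[OF assms] Th_dev by blast
    show "g (Th 0 x) = g x" using Th0 by simp
  qed auto
  then show "(Th t \<circ> g) x = (g \<circ> Th t) x" by simp
qed

end



lemma cont_local_UNIV:
  assumes "\<And>x. \<exists>N. open N \<and> x \<in> N \<and> continuous_on N f"
  shows "continuous_on UNIV f"
proof -
  have "continuous_on (\<Union>{N. open N \<and> continuous_on N f}) f"
    by (rule continuous_on_open_Union) auto
  moreover have "\<Union>{N. open N \<and> continuous_on N f} = UNIV" using assms by blast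
  ultimately show ?thesis by simp
qed

context S begin

lemma locjoint: "\<exists>N. open N \<and> x \<in> N \<and> continuous_on ({-dl<..<dl} \<times> N) (\<lambda>p. Th (fst p) (snd p))"
proof -
  obtain g gi W V h where d: "g \<in> G" "gi \<in> G" "g \<circ> gi = id" "gi \<circ> g = id" "open W" "gi x \<in> W" "W \<subseteq> V"
      "homeomorphism V (dev ` V) dev h" "\<forall>z\<in>W. \<forall>s. \<bar>s\<bar> \<le> dl \<longrightarrow> dev z + s *\<^sub>R v \<in> dev ` V"
    using dl(2)[rule_format, of x] by (elim bexE exE conjE) (rule that; assumption)
  have hinv: "dev (h w) = w" if "w \<in> dev ` V" for w using d(8) that unfolding homeomorphism_def by auto
  have hv: "h (dev z) = z" if "z \<in> V" for z using d(8) that unfolding homeomorphism_def by auto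
  have hc: "continuous_on (dev ` V) h" using d(8) unfolding homeomorphism_def by auto
  have loc: "Th s z = h (dev z + s *\<^sub>R v)" if z: "z \<in> W" and s: "\<bar>s\<bar> \<le> dl" for z s
  proof (rule Th_char[of "{-dl..dl}"])
    have inV: "dev z + r *\<^sub>R v \<in> dev ` V" if "r \<in> {-dl..dl}" for r using d(9) z that by auto
    show "continuous_on {-dl..dl} (\<lambda>r. h (dev z + r *\<^sub>R v))"
      by (rule continuous_on_compose2[OF hc]) (auto intro!: continuous_intros simp: inV)
    show "h (dev z + 0 *\<^sub>R v) = z" using hv z d(7) by auto
    show "\<forall>r\<in>{-dl..dl}. dev (h (dev z + r *\<^sub>R v)) = dev z + r *\<^sub>R v" using hinv inV by blast
  qed (use s dl(1) in auto)
  have gg: "g (gi y) = y" for y using d(3) by (metis comp_apply id_apply)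
  define N where "N = gi -` W"
  have oN: "open N" unfolding N_def
    using continuous_on_open_vimage[of UNIV gi] gcont[OF d(2)] d(5) by auto
  have xN: "x \<in> N" using d(6) by (simp add: N_def)
  have eq: "Th (fst p) (snd p) = g (h (dev (gi (snd p)) + fst p *\<^sub>R v))" if "p \<in> {-dl<..<dl} \<times> N" for p
  proof -
    have "Th (fst p) (snd p) = g (Th (fst p) (gi (snd p)))"
      using fun_cong[OF Th_comm[OF d(1), of "fst p"], of "gi (snd p)"] by (simp add: gg)
    also have "\<dots> = g (h (dev (gi (snd p)) + fst p *\<^sub>R v))"
      using loc[of "gi (snd p)" "fst p"] that by (auto simp: N_def)
    finally show ?thesis .
  qed
  have cdg: "continuous_on UNIV (\<lambda>y. dev (gi y))"
    by (rule continuous_on_compose2[OF lh_cont[OF dev] gcont[OF d(2)]]) auto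
  have "continuous_on ({-dl<..<dl} \<times> N) (\<lambda>p. dev (gi (snd p)))"
    by (rule continuous_on_compose2[OF cdg]) (auto intro: continuous_intros)
  then have c1: "continuous_on ({-dl<..<dl} \<times> N) (\<lambda>p. dev (gi (snd p)) + fst p *\<^sub>R v)"
    by (intro continuous_intros)
  have c2: "continuous_on ({-dl<..<dl} \<times> N) (\<lambda>p. h (dev (gi (snd p)) + fst p *\<^sub>R v))"
    by (rule continuous_on_compose2[OF hc c1]) (use d(9) in \<open>auto simp: N_def\<close>)
  have c3: "continuous_on ({-dl<..<dl} \<times> N) (\<lambda>p. g (h (dev (gi (snd p)) + fst p *\<^sub>R v)))"
    by (rule continuous_on_compose2[OF gcont[OF d(1)] c2]) auto
  have "continuous_on ({-dl<..<dl} \<times> N) (\<lambda>p. Th (fst p) (snd p))"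
    by (rule continuous_on_eq[OF c3]) (simp add: eq)
  then show ?thesis using oN xN by blast
qed

end


context S begin

lemma Th_cont_small: assumes "\<bar>s\<bar> < dl" shows "continuous_on UNIV (Th s)"
proof (rule cont_local_UNIV)
  fix x
  obtain N where N: "open N" "x \<in> N" "continuous_on ({-dl<..<dl} \<times> N) (\<lambda>p. Th (fst p) (snd p))"
    using locjoint by blast
  have "continuous_on N (\<lambda>z. Th (fst (s, z)) (snd (s, z)))"
    by (rule continuous_on_compose2[OF N(3)]) (use assms in \<open>auto intro!: continuous_intros\<close>)
  then show "\<exists>N. open N \<and> x \<in> N \<and> continuous_on N (Th s)" using N(1,2) by auto
qed

lemma Th_cont_n: "\<bar>t\<bar> < real n * dl \<Longrightarrow> continuous_on UNIV (Th t)"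
proof (induction n arbitrary: t)
  case 0 then show ?case by simp
next
  case (Suc n)
  show ?case
  proof (cases "\<bar>t\<bar> < dl")
    case True then show ?thesis by (rule Th_cont_small)
  next
    case False
    define s where "s = t / real (Suc n)"
    have n: "n \<ge> 1" using False Suc.prems dl(1) by (cases n) auto
    have s: "\<bar>s\<bar> < dl" using Suc.prems by (simp add: s_def field_simps)
    have t': "\<bar>t - s\<bar> < real n * dl"
    proof -
      have "t - s = t * real n / real (Suc n)" by (simp add: s_def field_simps)
      then have "\<bar>t - s\<bar> = \<bar>t\<bar> * real n / real (Suc n)" by (simp add: abs_mult)
      also have "\<dots> < real (Suc n) * dl * real n / real (Suc n)"
        using Suc.prems n by (intro divide_strict_right_mono mult_strict_right_mono) auto
      also have "\<dots> = real n * dl" by simp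
      finally show ?thesis .
    qed
    have "Th t = Th (t - s) \<circ> Th s" using Th_add[of "t - s" s] by simp
    then show ?thesis
      using continuous_on_compose[OF Th_cont_small[OF s] continuous_on_subset[OF Suc.IH[OF t']]] by simp
  qed
qed

lemma Th_cont: "continuous_on UNIV (Th t)"
proof -
  define n where "n = nat \<lceil>\<bar>t\<bar> / dl\<rceil> + 1"
  have "\<bar>t\<bar> / dl < real n" unfolding n_def by linarith
  then have "\<bar>t\<bar> < real n * dl" using dl(1) by (simp add: field_simps)
  then show ?thesis by (rule Th_cont_n)
qed

lemma Th_joint: "continuous_on UNIV (\<lambda>(t, x). Th t x)"
proof -
  have "continuous_on UNIV (\<lambda>p. Th (fst p) (snd p))"
  proof (rule cont_local_UNIV)
    fix p :: "real \<times> 'x"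
    obtain N where N: "open N" "snd p \<in> N" "continuous_on ({-dl<..<dl} \<times> N) (\<lambda>p. Th (fst p) (snd p))"
      using locjoint by blast
    define sh where "sh = (\<lambda>q::real \<times> 'x. (fst q - fst p, snd q))"
    define A where "A = UNIV \<inter> sh -` ({-dl<..<dl} \<times> N)"
    have csh: "continuous_on UNIV sh" unfolding sh_def by (intro continuous_intros)
    have "open (sh -` ({-dl<..<dl} \<times> N) \<inter> UNIV)"
      using continuous_on_open_vimage[of UNIV sh] csh N(1) by (simp add: open_Times)
    then have oA: "open A" unfolding A_def by (simp add: Int_commute)
    have pA: "p \<in> A" using N(2) dl(1) by (auto simp: A_def sh_def)
    have c1: "continuous_on A (\<lambda>q. Th (fst (sh q)) (snd (sh q)))"
      by (rule continuous_on_compose2[OF N(3) continuous_on_subset[OF csh]]) (auto simp: A_def)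
    have c2: "continuous_on A (\<lambda>q. Th (fst p) (Th (fst (sh q)) (snd (sh q))))"
      by (rule continuous_on_compose2[OF Th_cont c1]) auto
    have "Th (fst p) (Th (fst (sh q)) (snd (sh q))) = Th (fst q) (snd q)" for q
      using fun_cong[OF Th_add[of "fst p" "fst q - fst p"], of "snd q"] by (simp add: sh_def)
    then have "continuous_on A (\<lambda>q. Th (fst q) (snd q))" using c2 by simp
    then show "\<exists>N. open N \<and> p \<in> N \<and> continuous_on N (\<lambda>p. Th (fst p) (snd p))" using oA pA by blast
  qed
  then show ?thesis by (simp add: case_prod_beta')
qed

end


context S begin

lemma Th_inv: "Th t (Th (-t) x) = x" "Th (-t) (Th t x) = x"
  using fun_cong[OF Th_add[of t "-t"], of x] fun_cong[OF Th_add[of "-t" t], of x] Th0 by auto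

lemma Th_img: "Th t ` W = Th (-t) -` W"
  using Th_inv by (auto simp: image_def) (metis)

lemma open_set:
  "\<exists>U. open U \<and> U \<noteq> {} \<and> (\<forall>t. Th t ` U = U) \<and> (\<exists>h. homeomorphism U (dev ` U) dev h)"
proof -
  fix x0 :: 'x
  obtain V0 h0 where V: "open V0" "x0 \<in> V0" "open (dev ` V0)" "homeomorphism V0 (dev ` V0) dev h0"
    using dev unfolding local_homeo_def by blast
  obtain r where r: "r > 0" "ball (dev x0) r \<subseteq> dev ` V0"
    using V(2,3) open_contains_ball by blast
  define B where "B = ball (dev x0) r"
  define W where "W = V0 \<inter> dev -` B"
  have hinv: "dev (h0 w) = w" if "w \<in> dev ` V0" for w using V(4) that unfolding homeomorphism_def by auto
  have hv: "h0 (dev z) = z" if "z \<in> V0" for z using V(4) that unfolding homeomorphism_def by auto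
  have hc: "continuous_on (dev ` V0) h0" using V(4) unfolding homeomorphism_def by auto
  have oW: "open W" unfolding W_def B_def
    using continuous_on_open_vimage[of UNIV dev] lh_cont[OF dev] V(1) by (simp add: open_Int)
  have x0W: "x0 \<in> W" using V(2) r(1) by (simp add: W_def B_def)
  define U where "U = (\<Union>t. Th t ` W)"
  have oU: "open U" unfolding U_def
  proof (intro open_UN ballI)
    fix t show "open (Th t ` W)" unfolding Th_img
      using continuous_on_open_vimage[of UNIV "Th (-t)"] Th_cont oW by auto
  qed
  have neU: "U \<noteq> {}" using x0W Th0 unfolding U_def by (metis UN_I UNIV_I empty_iff id_apply image_eqI)
  have inv: "Th s ` U = U" for s
  proof
    show "Th s ` U \<subseteq> U" unfolding U_def
      using Th_add by (auto simp: image_comp[symmetric]) (metis image_comp rangeI UN_I image_eqI)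
    show "U \<subseteq> Th s ` U"
    proof
      fix y assume "y \<in> U"
      then obtain t w where tw: "w \<in> W" "y = Th t w" unfolding U_def by blast
      have "y = Th s (Th (t - s) w)" using fun_cong[OF Th_add[of s "t - s"], of w] tw by simp
      moreover have "Th (t - s) w \<in> U" using tw(1) unfolding U_def by blast
      ultimately show "y \<in> Th s ` U" by blast
    qed
  qed
  have inj: "inj_on dev U"
  proof (rule inj_onI)
    fix y1 y2 assume y1: "y1 \<in> U" and y2: "y2 \<in> U" and e: "dev y1 = dev y2"
    obtain t1 w1 where 1: "w1 \<in> W" "y1 = Th t1 w1" using y1 unfolding U_def by blast
    obtain t2 w2 where 2: "w2 \<in> W" "y2 = Th t2 w2" using y2 unfolding U_def by blast
    define d where "d = t1 - t2"
    have dw: "dev w2 = dev w1 + d *\<^sub>R v" using e 1 2 Th_dev by (simp add: d_def algebra_simps)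
    have b1: "dev w1 \<in> B" "dev w2 \<in> B" using 1(1) 2(1) by (auto simp: W_def)
    define I where "I = {min 0 d..max 0 d}"
    have inB: "dev w1 + r' *\<^sub>R v \<in> B" if "r' \<in> I" for r'
    proof (cases "d = 0")
      case True then show ?thesis using that b1 by (simp add: I_def)
    next
      case False
      define u where "u = r' / d"
      have u: "0 \<le> u" "u \<le> 1" using that False by (cases "d > 0"; auto simp: I_def u_def zero_le_divide_iff divide_le_eq_1)+
      have "dev w1 + r' *\<^sub>R v = (1 - u) *\<^sub>R dev w1 + u *\<^sub>R dev w2"
        using False by (simp add: dw u_def algebra_simps)
      also have "\<dots> \<in> B" using convexD[OF convex_ball[of "dev x0" r], of "dev w1" "dev w2" "1 - u" u] b1 u unfolding B_def by auto
      finally show ?thesis .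
    qed
    have "Th d w1 = h0 (dev w1 + d *\<^sub>R v)"
    proof (rule Th_char[of I])
      have inV: "dev w1 + r' *\<^sub>R v \<in> dev ` V0" if "r' \<in> I" for r' using inB[OF that] r(2) B_def by auto
      show "continuous_on I (\<lambda>r'. h0 (dev w1 + r' *\<^sub>R v))"
        by (rule continuous_on_compose2[OF hc]) (auto intro!: continuous_intros simp: inV)
      show "h0 (dev w1 + 0 *\<^sub>R v) = w1" using hv 1(1) by (simp add: W_def)
      show "\<forall>s\<in>I. dev (h0 (dev w1 + s *\<^sub>R v)) = dev w1 + s *\<^sub>R v" using hinv inV by blast
    qed (auto simp: I_def)
    also have "\<dots> = w2" using hv 2(1) dw[symmetric] by (simp add: W_def)
    finally have "Th d w1 = w2" .
    then have "y2 = Th (t2 + d) w1" using fun_cong[OF Th_add[of t2 d], of w1] 2(2) by simp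
    then show "y1 = y2" using 1(2) by (simp add: d_def)
  qed
  obtain h where h: "homeomorphism U (dev ` U) dev h"
  proof (rule homeomorphism_injective_open_map[OF _ refl inj])
    show "continuous_on U dev" using lh_cont[OF dev] by (rule continuous_on_subset) auto
    fix S assume "openin (top_of_set U) S"
    then have "open S" using oU openin_open_trans by blast
    then have "open (dev ` S)" by (rule lh_open_map[OF dev])
    moreover have "dev ` S \<subseteq> dev ` U" using \<open>openin (top_of_set U) S\<close> openin_imp_subset by blast
    ultimately show "openin (top_of_set (dev ` U)) (dev ` S)" by (metis inf.absorb_iff2 openin_open_Int)
  qed
  show ?thesis using oU neU inv h by blast
qed

end

theorem theorem2:
  fixes dev :: "'x::t2_space \<Rightarrow> real ^ 'n"
    and G :: "('x \<Rightarrow> 'x) set"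
    and L :: "('x \<Rightarrow> 'x) \<Rightarrow> real ^ 'n ^ 'n"
    and b :: "('x \<Rightarrow> 'x) \<Rightarrow> real ^ 'n"
    and v :: "real ^ 'n"
  assumes univ: "path_connected (UNIV :: 'x set)" "simply_connected (UNIV :: 'x set)"
    and dev: "local_homeo dev"
    and grp: "homeo_group G" "free_action G" "properly_discontinuous G" "cocompact G"
    and hol: "\<forall>g\<in>G. invertible (L g) \<and> (\<forall>x. dev (g x) = L g *v dev x + b g)"
    and par: "v \<noteq> 0" "\<forall>g\<in>G. L g *v v = v"
  shows "\<exists>\<Theta> :: real \<Rightarrow> 'x \<Rightarrow> 'x.
           continuous_on UNIV (\<lambda>(t, x). \<Theta> t x) \<and>
           \<Theta> 0 = id \<and> (\<forall>s t. \<Theta> (s + t) = \<Theta> s \<circ> \<Theta> t) \<and>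
           (\<forall>t. \<forall>g\<in>G. \<Theta> t \<circ> g = g \<circ> \<Theta> t) \<and>
           (\<forall>t x. dev (\<Theta> t x) = dev x + t *\<^sub>R v) \<and>
           (\<exists>U. open U \<and> U \<noteq> {} \<and> (\<forall>t. \<Theta> t ` U = U) \<and>
                (\<exists>h. homeomorphism U (dev ` U) dev h))"
proof -
  interpret S dev G L b v
    by unfold_locales (use dev grp(1) grp(4) hol par in auto)
  show ?thesis
  proof (rule exI[of _ Th], intro conjI allI ballI)
    show "continuous_on UNIV (\<lambda>(t, x). Th t x)" by (rule Th_joint)
    show "Th 0 = id" by (rule Th0)
    show "Th (s + t) = Th s \<circ> Th t" for s t by (rule Th_add)
    show "Th t \<circ> g = g \<circ> Th t" if "g \<in> G" for t g using that by (rule Th_comm)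
    show "dev (Th t x) = dev x + t *\<^sub>R v" for t x by (rule Th_dev)
    show "\<exists>U. open U \<and> U \<noteq> {} \<and> (\<forall>t. Th t ` U = U) \<and> (\<exists>h. homeomorphism U (dev ` U) dev h)"
      by (rule open_set)
  qed
qed

end
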